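(* For any integers $n\ge1$ and $k\ge1$ there exists a divisor $d\mid n$ with $d\le n^{1/2^k}$ such that \[ \tau(n)\le 2^{2^k-1}\tau(d)^{2^k}. \]
   Context: $\tau$ denotes the number-of-divisors function. *)

theory Defs
  imports Complex_Main
begin

definition tau :: "nat \<Rightarrow> nat" where
  "tau n = card {d. d dvd n}"

end

theory Submission
  imports Defs "HOL-Computational_Algebra.Primes"
begin

lemma fin_div: "(x::nat) > 0 \<Longrightarrow> finite {d. d dvd x}"
  by (simp add: finite_divisors_nat)

lemma tau_sub_img:
  "{d. d dvd (x::nat)*y} \<subseteq> (\<lambda>(u,v). u*v) ` ({u. u dvd x} \<times> {v. v dvd y})"
proof
  fix d assume "d \<in> {d. d dvd x*y}"
  then have "d dvd x*y" by simp
  then obtain u v where "d = u*v" "u dvd x" "v dvd y" by (erule dvd_productE)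
  then show "d \<in> (\<lambda>(u,v). u*v) ` ({u. u dvd x} \<times> {v. v dvd y})" by force
qed

lemma tau_mult_le:
  assumes "(x::nat) > 0" "y > 0"
  shows "tau (x*y) \<le> tau x * tau y"
proof -
  have "tau (x*y) \<le> card ((\<lambda>(u,v). u*v) ` ({u. u dvd x} \<times> {v. v dvd y}))"
    unfolding tau_def
    by (rule card_mono) (use assms fin_div tau_sub_img in auto)
  also have "\<dots> \<le> card ({u. u dvd x} \<times> {v. v dvd y})" by (rule card_image_le) (use assms fin_div in auto)
  also have "\<dots> = tau x * tau y" by (simp add: tau_def card_cartesian_product)
  finally show ?thesis .
qed

lemma tau_mult_coprime:
  assumes "(x::nat) > 0" "y > 0" "coprime x y"
  shows "tau (x*y) = tau x * tau y"
proof -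
  have inj: "inj_on (\<lambda>(u,v). u*v) ({u. u dvd x} \<times> {v. v dvd y})"
  proof (rule inj_onI, clarsimp)
    fix u v u' v' assume h: "u dvd x" "v dvd y" "u' dvd x" "v' dvd y" "u*v = u'*v'"
    have c1: "coprime u v'" using coprime_divisors[OF h(1) h(4) assms(3)] .
    have c2: "coprime u' v" using coprime_divisors[OF h(3) h(2) assms(3)] .
    have "u dvd u'*v'" using h(5) by (metis dvd_triv_left)
    then have "u dvd u'" using c1 by (simp add: coprime_dvd_mult_left_iff)
    moreover have "u' dvd u*v" using h(5) by (metis dvd_triv_left)
    then have "u' dvd u" using c2 by (simp add: coprime_dvd_mult_left_iff)
    ultimately have "u = u'" by (rule dvd_antisym)
    moreover have "u > 0" using h(1) assms(1) by (metis dvd_0_left_iff gr0I)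
    ultimately show "u = u' \<and> v = v'" using h(5) by simp
  qed
  have "{d. d dvd (x::nat)*y} = (\<lambda>(u,v). u*v) ` ({u. u dvd x} \<times> {v. v dvd y})"
    using tau_sub_img by (auto intro: mult_dvd_mono)
  then have "tau (x*y) = card ({u. u dvd x} \<times> {v. v dvd y})"
    unfolding tau_def using card_image[OF inj] by simp
  also have "\<dots> = tau x * tau y" by (simp add: tau_def card_cartesian_product)
  finally show ?thesis .
qed

lemma tau_prime_power:
  assumes "prime (p::nat)"
  shows "tau (p^i) = i + 1"
proof -
  have "{d. d dvd p^i} = (\<lambda>j. p^j) ` {0..i}"
    using divides_primepow_nat[OF assms] by auto
  moreover have "inj_on (\<lambda>j. p^j) {0..i}"
    using prime_gt_1_nat[OF assms] by (auto intro!: inj_onI)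
  ultimately show ?thesis unfolding tau_def by (simp add: card_image)
qed

lemma balance_arith:
  fixes A B I J :: nat
  assumes "A \<le> 2*B" "B \<le> 2*A" "I \<le> J" "J \<le> 2*I"
  shows "(A \<le> B \<longrightarrow> A*J \<le> 2*(B*I) \<and> B*I \<le> 2*(A*J)) \<and>
         (\<not> A \<le> B \<longrightarrow> A*I \<le> 2*(B*J) \<and> B*J \<le> 2*(A*I))"
proof (intro conjI impI)
  assume "A \<le> B"
  have "A*J \<le> B*(2*I)" using \<open>A \<le> B\<close> assms(4) by (rule mult_le_mono)
  then show "A*J \<le> 2*(B*I)" by simp
  have "B*I \<le> (2*A)*J" using assms(2,3) by (rule mult_le_mono)
  then show "B*I \<le> 2*(A*J)" by simp
next
  assume "\<not> A \<le> B"
  have "A*I \<le> (2*B)*J" using assms(1,3) by (rule mult_le_mono)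
  then show "A*I \<le> 2*(B*J)" by simp
  have "B*J \<le> A*(2*I)" using \<open>\<not> A \<le> B\<close> assms(4) by (intro mult_le_mono) auto
  then show "B*J \<le> 2*(A*I)" by simp
qed

lemma balanced_split:
  fixes n :: nat
  assumes "n \<ge> 1"
  shows "\<exists>a b. a * b = n \<and> tau a \<le> 2 * tau b \<and> tau b \<le> 2 * tau a"
  using assms
proof (induction n rule: less_induct)
  case (less n)
  show ?case
  proof (cases "n = 1")
    case True
    then show ?thesis by (intro exI[of _ 1]) simp
  next
    case False
    then have "n \<noteq> 1" by simp
    then obtain p where p: "prime p" "p dvd n" using prime_factor_nat by blast
    define e where "e = multiplicity p n"
    obtain y where y: "n = p^e * y" "\<not> p dvd y"
      proof -
      have "n \<noteq> 0" "\<not> is_unit p" using less.prems p(1) by (auto simp: prime_gt_1_nat)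
      then show ?thesis using multiplicity_decompose'[of n p] that unfolding e_def by blast
    qed
    have e1: "e \<ge> 1" unfolding e_def using p less.prems
      by (simp add: prime_multiplicity_gt_zero_iff Suc_le_eq)
    have p1: "p > 1" using p prime_gt_1_nat by blast
    have y0: "y > 0" using y less.prems by (cases "y = 0") auto
    have "p^e > 1" using p1 e1 by (intro one_less_power) auto
    then have "y < n" using y(1) y0 by simp
    then obtain a b where ab: "a * b = y" "tau a \<le> 2 * tau b" "tau b \<le> 2 * tau a"
      using less.IH y0 by fastforce
    have a0: "a > 0" and b0: "b > 0" using ab(1) y0 by auto
    have cpa: "coprime a (p^k)" for k
    proof -
      have "\<not> p dvd a" using y(2) ab(1) by (metis dvd_mult2)
      then have "coprime p a" using p(1) by (simp add: prime_imp_coprime)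
      then show ?thesis by (simp add: ac_simps)
    qed
    have cpb: "coprime b (p^k)" for k
    proof -
      have "\<not> p dvd b" using y(2) ab(1) by (metis dvd_mult)
      then have "coprime p b" using p(1) by (simp add: prime_imp_coprime)
      then show ?thesis by (simp add: ac_simps)
    qed
    have ta: "tau (a * p^k) = tau a * (k+1)" for k
      using tau_mult_coprime[OF a0 _ cpa] tau_prime_power[OF p(1)] p1 by simp
    have tb: "tau (b * p^k) = tau b * (k+1)" for k
      using tau_mult_coprime[OF b0 _ cpb] tau_prime_power[OF p(1)] p1 by simp
    define i where "i = e div 2"
    define j where "j = e - i"
    have ij: "i + j = e" "i+1 \<le> j+1" "j+1 \<le> 2*(i+1)" unfolding i_def j_def by auto
    have prod: "(a * p^i) * (b * p^j) = n" "(a * p^j) * (b * p^i) = n"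
      using y(1) ab(1) ij(1) by (auto simp: ac_simps power_add[symmetric])
    note bal = balance_arith[OF ab(2,3) ij(2,3)]
    show ?thesis
    proof (cases "tau a \<le> tau b")
      case True
      then show ?thesis using bal prod(2) ta tb by (intro exI[of _ "a*p^j"] exI[of _ "b*p^i"]) (simp add: ac_simps)
    next
      case False
      then show ?thesis using bal prod(1) ta tb by (intro exI[of _ "a*p^i"] exI[of _ "b*p^j"]) (simp add: ac_simps)
    qed
  qed
qed


lemma step1:
  fixes n :: nat
  assumes "n \<ge> 1"
  shows "\<exists>d. d dvd n \<and> d * d \<le> n \<and> tau n \<le> 2 * tau d ^ 2"
proof -
  obtain a b where ab: "a * b = n" "tau a \<le> 2 * tau b" "tau b \<le> 2 * tau a"
    using balanced_split[OF assms] by blast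
  have a0: "a > 0" and b0: "b > 0" using ab(1) assms by auto
  have t: "tau n \<le> tau a * tau b" using tau_mult_le[OF a0 b0] ab(1) by simp
  show ?thesis
  proof (cases "a \<le> b")
    case True
    have "a * a \<le> a * b" using True by simp
    moreover have "tau a * tau b \<le> tau a * (2 * tau a)" using ab(3) by simp
    then have "tau n \<le> 2 * tau a ^ 2" using t unfolding power2_eq_square by linarith
    ultimately show ?thesis using ab(1)
      by (intro exI[of _ a]) auto
  next
    case False
    have "b * b \<le> a * b" using False by simp
    moreover have "tau a * tau b \<le> (2 * tau b) * tau b" using ab(2) by simp
    then have "tau n \<le> 2 * tau b ^ 2" using t unfolding power2_eq_square by linarith
    ultimately show ?thesis using ab(1)
      by (intro exI[of _ b]) auto
  qed
qed

lemma gen: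
  fixes n k :: nat
  assumes "n \<ge> 1"
  shows "\<exists>d. d dvd n \<and> real d \<le> real n powr (1 / 2 ^ k) \<and>
             tau n \<le> 2 ^ (2 ^ k - 1) * tau d ^ (2 ^ k)"
proof (induction k)
  case 0
  then show ?case by (intro exI[of _ n]) auto
next
  case (Suc k)
  then obtain d where d: "d dvd n" "real d \<le> real n powr (1 / 2 ^ k)"
     "tau n \<le> 2 ^ (2 ^ k - 1) * tau d ^ (2 ^ k)" by blast
  have d1: "d \<ge> 1" using d(1) assms by (cases "d = 0") auto
  obtain d' where d': "d' dvd d" "d' * d' \<le> d" "tau d \<le> 2 * tau d' ^ 2"
    using step1[OF d1] by blast
  have "real d' = sqrt (real (d' * d'))" by simp
  also have "\<dots> \<le> sqrt (real d)" using d'(2) by (intro real_sqrt_le_mono) (simp only: of_nat_le_iff)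
  also have "\<dots> \<le> sqrt (real n powr (1 / 2 ^ k))" using d(2) by simp
  also have "\<dots> = (real n powr (1 / 2 ^ k)) powr (1/2)"
    using assms by (simp add: sqrt_def powr_half_sqrt)
  also have "\<dots> = real n powr (1 / 2 ^ Suc k)" by (simp add: powr_powr mult.commute)
  finally have r: "real d' \<le> real n powr (1 / 2 ^ Suc k)" .
  have "tau n \<le> 2 ^ (2 ^ k - 1) * (2 * tau d' ^ 2) ^ (2 ^ k)"
    using d(3) d'(3) by (meson le_trans mult_le_mono2 power_mono zero_le)
  also have "\<dots> = 2 ^ (2 ^ k - 1) * 2 ^ (2 ^ k) * tau d' ^ (2 * 2 ^ k)"
    by (simp add: power_mult_distrib power_mult)
  also have "2 ^ (2 ^ k - 1) * 2 ^ (2 ^ k) = (2::nat) ^ (2 ^ Suc k - 1)"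
  proof -
    have "(2::nat) ^ k \<ge> 1" by simp
    then have "2 ^ k - 1 + 2 ^ k = (2::nat) ^ Suc k - 1" by simp
    then show ?thesis by (metis power_add)
  qed
  finally have "tau n \<le> 2 ^ (2 ^ Suc k - 1) * tau d' ^ (2 ^ Suc k)" by simp
  then show ?case using r d(1) d'(1) dvd_trans by blast
qed

theorem mainTheorem6:
  fixes n k :: nat
  assumes "n \<ge> 1" and "k \<ge> 1"
  shows "\<exists>d. d dvd n \<and> real d \<le> real n powr (1 / 2 ^ k) \<and>
             tau n \<le> 2 ^ (2 ^ k - 1) * tau d ^ (2 ^ k)"
  using gen[OF assms(1)] .

end
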